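(* Let $q\ge2$ and let $(p_1,\dots,p_q)$ and $(f_1,\dots,f_q)$ be vectors of positive reals, each summing to $1$, satisfying $f_1p_1\ge f_2p_2\ge\dots\ge f_qp_q$. Let $1\le z<q$ be an integer and $w=\lfloor z/2\rfloor+1$. Then: (1) if $z$ is even, $\frac{3z+2}{2}f_wp_w+(2z+1)\sum_{j=w+1}^q f_jp_j\le1$; (2) if $z$ is odd, $\frac{z+1}{2}f_wp_w+(2z+1)\sum_{j=w+1}^q f_jp_j\le 1$. *)

theory Defs
  imports Main Complex_Main
begin

end

theory Submission
  imports Defs
begin

lemma mono_aux:
  fixes s :: "nat \<Rightarrow> real"
  assumes "\<forall>i. 1 \<le> i \<and> i < q \<longrightarrow> s (i+1) \<le> s i"
  shows "1 \<le> k \<Longrightarrow> k \<le> j \<Longrightarrow> j \<le> q \<Longrightarrow> s j \<le> s k"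
proof (induction j)
  case 0 then show ?case by simp
next
  case (Suc j)
  show ?case
  proof (cases "k = Suc j")
    case False
    then have "k \<le> j" using Suc by simp
    then have "s j \<le> s k" using Suc by simp
    moreover have "s (Suc j) \<le> s j" using assms Suc \<open>k \<le> j\<close> by (metis Suc_eq_plus1 Suc_le_eq le_trans)
    ultimately show ?thesis by simp
  qed simp
qed

lemma sq_aux:
  fixes s :: "nat \<Rightarrow> real"
  assumes "\<forall>i. 1 \<le> i \<and> i < q \<longrightarrow> s (i+1) \<le> s i"
    and "\<forall>i\<in>{1..q}. s i \<ge> 0"
  shows "n \<le> q \<Longrightarrow> (\<Sum>k=1..n. (2 * real k - 1) * (s k)^2) \<le> (\<Sum>k=1..n. s k)^2"
proof (induction n)
  case 0 then show ?case by simp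
next
  case (Suc n)
  have IH: "(\<Sum>k=1..n. (2 * real k - 1) * (s k)^2) \<le> (\<Sum>k=1..n. s k)^2" using Suc by simp
  have ge: "(\<Sum>k=1..n. s k) \<ge> (\<Sum>k=1..n. s (Suc n))"
    apply (rule sum_mono) using mono_aux[OF assms(1)] Suc.prems by simp
  hence ge2: "(\<Sum>k=1..n. s k) \<ge> real n * s (Suc n)" by simp
  have nn: "s (Suc n) \<ge> 0" using assms(2) Suc.prems by simp
  have "(\<Sum>k=1..Suc n. s k)^2 = (\<Sum>k=1..n. s k)^2 + 2 * (\<Sum>k=1..n. s k) * s (Suc n) + (s (Suc n))^2"
    by (simp add: power2_eq_square algebra_simps)
  moreover have "2 * (\<Sum>k=1..n. s k) * s (Suc n) \<ge> 2 * (real n * s (Suc n)) * s (Suc n)"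
    using ge2 nn by (simp add: mult_right_mono)
  ultimately show ?case using IH by (simp add: power2_eq_square algebra_simps)
qed

lemma odd_sum: "(\<Sum>k=1..(w::nat). 2 * real k - 1) = real w ^ 2"
  by (induction w) (auto simp: power2_eq_square algebra_simps)

lemma tri_sum: "m \<le> n \<Longrightarrow> (\<Sum>k=m+1..(n::nat). 2 * real n + 2 - 2 * real k) = (real n - real m) * (real n - real m + 1)"
proof (induction n)
  case 0 then show ?case by simp
next
  case (Suc n)
  show ?case
  proof (cases "m = Suc n")
    case True then show ?thesis by simp
  next
    case False
    then have "m \<le> n" using Suc by simp
    have "(\<Sum>k=m+1..Suc n. 2 * real (Suc n) + 2 - 2 * real k)
        = (\<Sum>k=m+1..n. 2 * real (Suc n) + 2 - 2 * real k) + 2"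
      using \<open>m \<le> n\<close> by (subst sum.cl_ivl_Suc) simp
    also have "(\<Sum>k=m+1..n. 2 * real (Suc n) + 2 - 2 * real k) = (\<Sum>k=m+1..n. (2 * real n + 2 - 2 * real k) + 2)"
      by (rule sum.cong) (simp_all add: algebra_simps)
    also have "\<dots> = (real n - real m) * (real n - real m + 1) + 2 * (real n - real m)"
    proof -
      have "(\<Sum>k=m+1..n. (2 * real n + 2 - 2 * real k) + 2) = (\<Sum>k=m+1..n. (2 * real n + 2 - 2 * real k)) + (\<Sum>k=m+1..n. (2::real))"
        by (rule sum.distrib)
      moreover have "(\<Sum>k=m+1..n. (2::real)) = 2 * (real n - real m)" using \<open>m \<le> n\<close> by (simp add: of_nat_diff)
      ultimately show ?thesis using Suc.IH[OF \<open>m \<le> n\<close>] by linarith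
    qed
    finally show ?thesis by (simp add: algebra_simps)
  qed
qed

theorem proposition5p5:
  fixes q z w :: nat and p f :: "nat \<Rightarrow> real"
  assumes "q \<ge> 2"
    and "\<forall>i\<in>{1..q}. p i > 0" and "\<forall>i\<in>{1..q}. f i > 0"
    and "(\<Sum>i=1..q. p i) = 1" and "(\<Sum>i=1..q. f i) = 1"
    and "\<forall>i. 1 \<le> i \<and> i < q \<longrightarrow> f (i+1) * p (i+1) \<le> f i * p i"
    and "1 \<le> z" and "z < q"
    and "w = z div 2 + 1"
  shows "(even z \<longrightarrow>
           (3 * real z + 2) / 2 * (f w * p w) + (2 * real z + 1) * (\<Sum>j=w+1..q. f j * p j) \<le> 1)
       \<and> (odd z \<longrightarrow>
           (real z + 1) / 2 * (f w * p w) + (2 * real z + 1) * (\<Sum>j=w+1..q. f j * p j) \<le> 1)"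
proof -
  define a where "a k = f k * p k" for k
  define s where "s k = sqrt (a k)" for k
  have apos: "\<forall>i\<in>{1..q}. a i \<ge> 0" using assms(2,3) by (simp add: a_def less_imp_le)
  have amono: "\<forall>i. 1 \<le> i \<and> i < q \<longrightarrow> a (i+1) \<le> a i" using assms(6) by (simp add: a_def)
  have smono: "\<forall>i. 1 \<le> i \<and> i < q \<longrightarrow> s (i+1) \<le> s i" using amono by (simp add: s_def)
  have spos: "\<forall>i\<in>{1..q}. s i \<ge> 0" using apos by (simp add: s_def)
  have ssq: "\<And>k. k \<in> {1..q} \<Longrightarrow> (s k)^2 = a k" using apos by (simp add: s_def)
  have sle: "\<And>k. k \<in> {1..q} \<Longrightarrow> s k \<le> (f k + p k) / 2"
    unfolding s_def a_def using assms(2,3) arith_geo_mean_sqrt by (metis less_imp_le)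
  have "(\<Sum>k=1..q. s k) \<le> (\<Sum>k=1..q. (f k + p k) / 2)" by (rule sum_mono) (use sle in auto)
  also have "\<dots> = 1" using assms(4,5) by (simp add: sum.distrib sum_divide_distrib[symmetric])
  finally have S1: "(\<Sum>k=1..q. s k) \<le> 1" .
  have S0: "(\<Sum>k=1..q. s k) \<ge> 0" using spos by (intro sum_nonneg) auto
  have "(\<Sum>k=1..q. (2 * real k - 1) * (s k)^2) \<le> (\<Sum>k=1..q. s k)^2"
    using sq_aux[OF smono spos] by simp
  also have "\<dots> \<le> 1" using S0 S1 by (simp add: power_le_one)
  finally have m0: "(\<Sum>k=1..q. (2 * real k - 1) * (s k)^2) \<le> 1" .
  have "(\<Sum>k=1..q. (2 * real k - 1) * (s k)^2) = (\<Sum>k=1..q. (2 * real k - 1) * a k)"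
    by (rule sum.cong) (simp_all add: ssq)
  with m0 have main: "(\<Sum>k=1..q. (2 * real k - 1) * a k) \<le> 1" by simp
  have wz: "w \<le> z" "1 \<le> w" using assms(7,9) by auto
  have split: "(\<Sum>k=1..q. (2 * real k - 1) * a k) = (\<Sum>k=1..w. (2 * real k - 1) * a k) + (\<Sum>k=w+1..q. (2 * real k - 1) * a k)"
    using sum.ub_add_nat[of 1 w "\<lambda>k. (2 * real k - 1) * a k" "q - w"] wz assms(8) by simp
  have aw: "\<And>k. 1 \<le> k \<Longrightarrow> k \<le> w \<Longrightarrow> a w \<le> a k" using mono_aux[OF amono] wz assms(8) by simp
  have aw2: "\<And>k. w \<le> k \<Longrightarrow> k \<le> q \<Longrightarrow> a k \<le> a w" using mono_aux[OF amono] wz by simp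
  have "(\<Sum>k=1..w. (2 * real k - 1) * a w) \<le> (\<Sum>k=1..w. (2 * real k - 1) * a k)"
    by (rule sum_mono) (use aw in \<open>auto intro: mult_left_mono\<close>)
  hence head: "real w ^ 2 * a w \<le> (\<Sum>k=1..w. (2 * real k - 1) * a k)"
    using odd_sum[of w] by (simp add: sum_distrib_right[symmetric])
  define g where "g k = (2 * real z + 2 - 2 * real k) * a k" for k
  have gid: "(\<Sum>k=w+1..q. g k) = (2 * real z + 1) * (\<Sum>k=w+1..q. a k) - (\<Sum>k=w+1..q. (2 * real k - 1) * a k)"
  proof -
    have "(2 * real z + 1) * (\<Sum>k=w+1..q. a k) - (\<Sum>k=w+1..q. (2 * real k - 1) * a k)
        = (\<Sum>k=w+1..q. (2 * real z + 1) * a k - (2 * real k - 1) * a k)"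
      by (simp only: sum_distrib_left sum_subtractf)
    also have "\<dots> = (\<Sum>k=w+1..q. g k)"
      by (rule sum.cong) (simp_all add: g_def algebra_simps)
    finally show ?thesis by simp
  qed
  have gsplit: "(\<Sum>k=w+1..q. g k) = (\<Sum>k=w+1..z. g k) + (\<Sum>k=z+1..q. g k)"
    using sum.ub_add_nat[of "w+1" z g "q - z"] wz assms(8) by simp
  have "(\<Sum>k=w+1..z. g k) \<le> (\<Sum>k=w+1..z. (2 * real z + 2 - 2 * real k) * a w)"
    unfolding g_def by (rule sum_mono) (use aw2 assms(8) in \<open>auto intro: mult_left_mono\<close>)
  also have "\<dots> = (real z - real w) * (real z - real w + 1) * a w"
    using tri_sum[OF wz(1)] by (simp add: sum_distrib_right[symmetric])
  finally have g1: "(\<Sum>k=w+1..z. g k) \<le> (real z - real w) * (real z - real w + 1) * a w" .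
  have g2: "(\<Sum>k=z+1..q. g k) \<le> 0"
    unfolding g_def by (rule sum_nonpos) (use apos wz in \<open>auto intro!: mult_nonpos_nonneg\<close>)
  have key: "(real w ^ 2 - (real z - real w) * (real z - real w + 1)) * a w + (2 * real z + 1) * (\<Sum>k=w+1..q. a k) \<le> 1"
    using main split head gid gsplit g1 g2 by (simp add: algebra_simps)
  show ?thesis
  proof (intro conjI impI)
    assume "even z"
    then have hw: "real w = (real z + 2) / 2" using assms(9) by (auto elim!: evenE)
    have hc: "(3 * real z + 2) / 2 = real w ^ 2 - (real z - real w) * (real z - real w + 1)"
      unfolding hw by (simp add: power2_eq_square field_simps)
    show "(3 * real z + 2) / 2 * (f w * p w) + (2 * real z + 1) * (\<Sum>j=w+1..q. f j * p j) \<le> 1"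
      using key unfolding a_def by (subst hc) simp
  next
    assume "odd z"
    then have hw: "real w = (real z + 1) / 2" using assms(9) by (auto elim!: oddE)
    have hc: "(real z + 1) / 2 = real w ^ 2 - (real z - real w) * (real z - real w + 1)"
      unfolding hw by (simp add: power2_eq_square field_simps)
    show "(real z + 1) / 2 * (f w * p w) + (2 * real z + 1) * (\<Sum>j=w+1..q. f j * p j) \<le> 1"
      using key unfolding a_def by (subst hc) simp
  qed
qed

end
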